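(* Let $G$ be a finite graph and let $\mathcal{V}=\{V_1,\ldots,V_n\}$ be a partition of $V(G)$; write $V_I=\bigcup_{i\in I}V_i$. Each of the following conditions is sufficient for $\mathbf{RG}(\mathcal{I}(G),\mathcal{V})$ to be connected: (a) $\tilde\gamma(G[V_I])\ge 2|I|+1$ for all nonempty $I\subseteq[n]$; (b) $i\gamma(G[V_I])\ge|I|+1$ for all nonempty $I\subseteq[n]$.
   Context: $\mathcal{I}(G)$ is the complex of independent sets of $G$. An independent transversal is an independent set of $G$ containing exactly one vertex from each $V_i$. $\mathbf{RG}(\mathcal{I}(G),\mathcal{V})$ is the graph on the independent transversals, two being adjacent if their union is an independent set of size $n+1$. A vertex set $X$ strongly dominates a vertex set $Y$ if every vertex of $Y$ is adjacent to some vertex of $X$. $\tilde\gamma(H)$ is the minimum size of a set strongly dominating $V(H)$; $i\gamma(H)$ is the minimum integer $\ell$ such that every independent set of $H$ is strongly dominated by some vertex set of size at most $\ell$ (these are $\infty$ if no such set/integer exists). *)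

theory Defs
  imports Main "HOL-Library.Extended_Nat"
begin

definition fin_graph :: "'a set \<Rightarrow> ('a \<Rightarrow> 'a \<Rightarrow> bool) \<Rightarrow> bool" where
  "fin_graph V E \<longleftrightarrow> finite V \<and> (\<forall>x y. E x y \<longrightarrow> x \<in> V \<and> y \<in> V)
     \<and> (\<forall>x y. E x y \<longrightarrow> E y x) \<and> (\<forall>x. \<not> E x x)"

definition is_partition :: "'a set \<Rightarrow> nat \<Rightarrow> (nat \<Rightarrow> 'a set) \<Rightarrow> bool" where
  "is_partition V n P \<longleftrightarrow> (\<Union>i<n. P i) = V \<and> (\<forall>i<n. P i \<noteq> {})
     \<and> (\<forall>i<n. \<forall>j<n. i \<noteq> j \<longrightarrow> P i \<inter> P j = {})"

definition parts_union :: "(nat \<Rightarrow> 'a set) \<Rightarrow> nat set \<Rightarrow> 'a set" where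
  "parts_union P I = (\<Union>i\<in>I. P i)"

definition indep_set :: "'a set \<Rightarrow> ('a \<Rightarrow> 'a \<Rightarrow> bool) \<Rightarrow> 'a set \<Rightarrow> bool" where
  "indep_set V E S \<longleftrightarrow> S \<subseteq> V \<and> (\<forall>x\<in>S. \<forall>y\<in>S. \<not> E x y)"

definition indep_transversal ::
  "'a set \<Rightarrow> ('a \<Rightarrow> 'a \<Rightarrow> bool) \<Rightarrow> nat \<Rightarrow> (nat \<Rightarrow> 'a set) \<Rightarrow> 'a set \<Rightarrow> bool" where
  "indep_transversal V E n P T \<longleftrightarrow> indep_set V E T \<and> T \<subseteq> (\<Union>i<n. P i)
     \<and> (\<forall>i<n. card (T \<inter> P i) = 1)"

definition RG_adj ::
  "'a set \<Rightarrow> ('a \<Rightarrow> 'a \<Rightarrow> bool) \<Rightarrow> nat \<Rightarrow> (nat \<Rightarrow> 'a set) \<Rightarrow> 'a set \<Rightarrow> 'a set \<Rightarrow> bool" where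
  "RG_adj V E n P T T' \<longleftrightarrow> indep_transversal V E n P T \<and> indep_transversal V E n P T'
     \<and> indep_set V E (T \<union> T') \<and> card (T \<union> T') = n + 1"

definition RG_connected ::
  "'a set \<Rightarrow> ('a \<Rightarrow> 'a \<Rightarrow> bool) \<Rightarrow> nat \<Rightarrow> (nat \<Rightarrow> 'a set) \<Rightarrow> bool" where
  "RG_connected V E n P \<longleftrightarrow> (\<forall>T T'. indep_transversal V E n P T \<and> indep_transversal V E n P T'
     \<longrightarrow> (RG_adj V E n P)\<^sup>*\<^sup>* T T')"

definition strongly_dominates :: "('a \<Rightarrow> 'a \<Rightarrow> bool) \<Rightarrow> 'a set \<Rightarrow> 'a set \<Rightarrow> bool" where
  "strongly_dominates E X Y \<longleftrightarrow> (\<forall>y\<in>Y. \<exists>x\<in>X. E x y)"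

text \<open>Graphs are given as (W, E) with induced subgraph on W, i.e. only edges
inside W count. tilde-gamma; infinity if no strongly dominating set exists.\<close>
definition tgamma :: "'a set \<Rightarrow> ('a \<Rightarrow> 'a \<Rightarrow> bool) \<Rightarrow> enat" where
  "tgamma W E = (INF X \<in> {X. X \<subseteq> W \<and> strongly_dominates (\<lambda>x y. x \<in> W \<and> y \<in> W \<and> E x y) X W}.
                    enat (card X))"

definition igamma :: "'a set \<Rightarrow> ('a \<Rightarrow> 'a \<Rightarrow> bool) \<Rightarrow> enat" where
  "igamma W E = (INF l \<in> {l::nat. \<forall>S. indep_set W E S \<longrightarrow>
        (\<exists>X. X \<subseteq> W \<and> card X \<le> l \<and> strongly_dominates (\<lambda>x y. x \<in> W \<and> y \<in> W \<and> E x y) X S)}.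
        enat l)"

end

theory Submission
  imports Defs
begin


definition sd :: "'b set \<Rightarrow> 'b set \<Rightarrow> 'b set" where
  "sd A B = (A - B) \<union> (B - A)"

lemma mem_sd[simp]: "x \<in> sd A B \<longleftrightarrow> (x \<in> A) \<noteq> (x \<in> B)"
  unfolding sd_def by auto

lemma finite_sd: "finite A \<Longrightarrow> finite B \<Longrightarrow> finite (sd A B)"
  unfolding sd_def by simp

definition sds :: "('i \<Rightarrow> 'b set) \<Rightarrow> 'i set \<Rightarrow> 'b set" where
  "sds f I = {x. odd (card {i\<in>I. x \<in> f i})}"

lemma odd_card_sd:
  assumes "finite X" "finite Y"
  shows "odd (card (sd X Y)) \<longleftrightarrow> odd (card X) \<noteq> odd (card Y)"
proof -
  have e: "sd X Y = (X \<union> Y) - (X \<inter> Y)" by auto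
  have "card (sd X Y) = card (X \<union> Y) - card (X \<inter> Y)"
    unfolding e using assms by (simp add: card_Diff_subset Int_Un_eq(4) inf_le1 le_supI1)
  moreover have "card X + card Y = card (X \<union> Y) + card (X \<inter> Y)"
    using assms card_Un_Int by blast
  moreover have "card (X \<inter> Y) \<le> card (X \<union> Y)" using assms by (meson card_mono finite_UnI inf_le1 le_supI1)
  ultimately have "card (sd X Y) + 2 * card (X \<inter> Y) = card X + card Y" by linarith
  then show ?thesis by presburger
qed

lemma sds_empty[simp]: "sds f {} = {}"
  unfolding sds_def by simp

lemma sds_sd_set:
  assumes "finite A" "finite B"
  shows "sds f (sd A B) = sd (sds f A) (sds f B)"
proof -
  have "\<And>x. {i\<in>sd A B. x \<in> f i} = sd {i\<in>A. x \<in> f i} {i\<in>B. x \<in> f i}" by auto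
  then show ?thesis unfolding sds_def using assms
    by (auto simp: odd_card_sd)
qed

lemma sds_insert:
  assumes "finite I" "i \<notin> I"
  shows "sds f (insert i I) = sd (f i) (sds f I)"
proof -
  have "\<And>x. {j\<in>insert i I. x \<in> f j} = (if x \<in> f i then insert i {j\<in>I. x \<in> f j} else {j\<in>I. x \<in> f j})"
    by auto
  then show ?thesis unfolding sds_def using assms by auto
qed

lemma sds_sd:
  assumes "finite I"
  shows "sds (\<lambda>i. sd (f i) (g i)) I = sd (sds f I) (sds g I)"
  using assms by (induction I rule: finite_induct) (auto simp: sds_insert)

lemma sds_cong: "(\<And>i. i \<in> I \<Longrightarrow> f i = g i) \<Longrightarrow> sds f I = sds g I"
proof -
  assume a: "\<And>i. i \<in> I \<Longrightarrow> f i = g i"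
  have "\<And>x. {i\<in>I. x \<in> f i} = {i\<in>I. x \<in> g i}" using a by auto
  then show ?thesis unfolding sds_def by simp
qed

lemma sds_subset: "sds f I \<subseteq> \<Union> (f ` I)"
proof
  fix x assume "x \<in> sds f I"
  then have "{i\<in>I. x \<in> f i} \<noteq> {}" unfolding sds_def by (metis (no_types, lifting) card.empty even_zero mem_Collect_eq)
  then show "x \<in> \<Union> (f ` I)" by blast
qed

lemma finite_sds: "finite I \<Longrightarrow> (\<And>i. i \<in> I \<Longrightarrow> finite (f i)) \<Longrightarrow> finite (sds f I)"
  by (meson finite_UN_I finite_subset sds_subset)

lemma sds_single_inj:
  assumes "inj_on f I"
  shows "sds (\<lambda>i. {f i}) I = f ` I"
proof -
  have "x \<in> sds (\<lambda>i. {f i}) I \<longleftrightarrow> x \<in> f ` I" for x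
  proof (cases "x \<in> f ` I")
    case True
    then obtain i where i: "i \<in> I" "x = f i" by auto
    then have "{j\<in>I. x \<in> {f j}} = {i}" using assms by (auto simp: inj_on_def)
    then show ?thesis unfolding sds_def using True by simp
  next
    case False
    then have "{j\<in>I. x \<in> {f j}} = {}" by blast
    then show ?thesis unfolding sds_def using False by (metis (no_types, lifting) card.empty even_zero mem_Collect_eq)
  qed
  then show ?thesis by blast
qed

lemma sds_double:
  assumes "finite A" "\<And>i j. h i j = h j i"
  shows "sds (\<lambda>i. sds (h i) (A - {i})) A = {}"
  using assms(1)
proof (induction A rule: finite_induct)
  case empty
  then show ?case by simp
next
  case (insert a A)
  have "sds (\<lambda>i. sds (h i) (insert a A - {i})) (insert a A)
      = sd (sds (h a) A) (sds (\<lambda>i. sds (h i) (insert a A - {i})) A)"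
    using insert by (simp add: sds_insert)
  also have "sds (\<lambda>i. sds (h i) (insert a A - {i})) A = sds (\<lambda>i. sd (h i a) (sds (h i) (A - {i}))) A"
  proof (rule sds_cong)
    fix i assume "i \<in> A"
    then have "insert a A - {i} = insert a (A - {i})" using insert by auto
    then show "sds (h i) (insert a A - {i}) = sd (h i a) (sds (h i) (A - {i}))"
      using insert by (simp add: sds_insert)
  qed
  also have "\<dots> = sd (sds (\<lambda>i. h i a) A) (sds (\<lambda>i. sds (h i) (A - {i})) A)"
    using insert by (simp add: sds_sd)
  also have "sds (\<lambda>i. h i a) A = sds (h a) A" using assms(2) by metis
  finally show ?case using insert by (auto simp: sd_def)
qed



definition facets :: "'a set \<Rightarrow> 'a set set" where
  "facets \<sigma> = (\<lambda>x. \<sigma> - {x}) ` \<sigma>"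

definition bd :: "'a set set \<Rightarrow> 'a set set" where
  "bd c = sds facets c"

definition cone :: "'a \<Rightarrow> 'a set set \<Rightarrow> 'a set set" where
  "cone w c = insert w ` c"

lemma bd_empty[simp]: "bd {} = {}" unfolding bd_def by simp

lemma bd_single: "bd {\<sigma>} = facets \<sigma>"
proof -
  have "\<And>x. {\<tau>\<in>{\<sigma>}. x \<in> facets \<tau>} = (if x \<in> facets \<sigma> then {\<sigma>} else {})" by auto
  then show ?thesis unfolding bd_def sds_def by auto
qed

lemma bd_sd: "finite a \<Longrightarrow> finite b \<Longrightarrow> bd (sd a b) = sd (bd a) (bd b)"
  unfolding bd_def by (rule sds_sd_set)

lemma mem_bd: "\<tau> \<in> bd c \<Longrightarrow> \<exists>\<sigma>\<in>c. \<exists>x\<in>\<sigma>. \<tau> = \<sigma> - {x}"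
  unfolding bd_def using sds_subset[of facets c] unfolding facets_def by blast

lemma finite_bd: "finite c \<Longrightarrow> (\<And>\<sigma>. \<sigma> \<in> c \<Longrightarrow> finite \<sigma>) \<Longrightarrow> finite (bd c)"
  unfolding bd_def by (rule finite_sds) (auto simp: facets_def)

lemma bd_sds:
  assumes "finite I" "\<And>i. i \<in> I \<Longrightarrow> finite (f i)"
  shows "bd (sds f I) = sds (\<lambda>i. bd (f i)) I"
  using assms
proof (induction I rule: finite_induct)
  case empty
  then show ?case by simp
next
  case (insert i I)
  have "finite (sds f I)" using insert by (intro finite_sds) auto
  then show ?case using insert by (simp add: sds_insert bd_sd)
qed

lemma bd_cone:
  assumes "finite c" "\<And>\<sigma>. \<sigma> \<in> c \<Longrightarrow> w \<notin> \<sigma>"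
  shows "bd (cone w c) = sd c (cone w (bd c))"
proof -
  have inj: "inj_on (insert w) c" using assms(2) unfolding inj_on_def
    by (metis insert_ident)
  have bdfree: "\<And>\<tau>. \<tau> \<in> bd c \<Longrightarrow> w \<notin> \<tau>" using mem_bd assms(2) by blast
  have "\<tau> \<in> bd (cone w c) \<longleftrightarrow> \<tau> \<in> sd c (cone w (bd c))" for \<tau>
  proof (cases "w \<in> \<tau>")
    case False
    have seq: "{\<rho>\<in>cone w c. \<tau> \<in> facets \<rho>} = (if \<tau> \<in> c then {insert w \<tau>} else {})"
    proof -
      have "\<rho> \<in> cone w c \<and> \<tau> \<in> facets \<rho> \<longleftrightarrow> \<tau> \<in> c \<and> \<rho> = insert w \<tau>" for \<rho>
      proof
        assume h: "\<rho> \<in> cone w c \<and> \<tau> \<in> facets \<rho>"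
        then obtain \<sigma> where s: "\<sigma> \<in> c" "\<rho> = insert w \<sigma>" unfolding cone_def by auto
        from h obtain y where y: "y \<in> \<rho>" "\<tau> = \<rho> - {y}" unfolding facets_def by auto
        have "y = w" using y False s by auto
        then have "\<tau> = \<sigma>" using y s assms(2) by auto
        then show "\<tau> \<in> c \<and> \<rho> = insert w \<tau>" using s by auto
      next
        assume "\<tau> \<in> c \<and> \<rho> = insert w \<tau>"
        then show "\<rho> \<in> cone w c \<and> \<tau> \<in> facets \<rho>" unfolding cone_def facets_def
          using False by (metis Diff_insert_absorb image_eqI insertI1)
      qed
      then show ?thesis by (simp add: set_eq_iff)
    qed
    have nc: "\<tau> \<notin> cone w (bd c)" using False unfolding cone_def by auto
    have cn: "card {\<rho>\<in>cone w c. \<tau> \<in> facets \<rho>} = (if \<tau> \<in> c then 1 else 0)"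
      unfolding seq by simp
    have "\<tau> \<in> bd (cone w c) \<longleftrightarrow> \<tau> \<in> c" unfolding bd_def sds_def
      using cn by (cases "\<tau> \<in> c") simp_all
    then show ?thesis using nc by simp
  next
    case True
    define \<tau>' where "\<tau>' = \<tau> - {w}"
    have tt: "\<tau> = insert w \<tau>'" "w \<notin> \<tau>'" using True \<tau>'_def by auto
    have "{\<rho>\<in>cone w c. \<tau> \<in> facets \<rho>} = insert w ` {\<sigma>\<in>c. \<tau>' \<in> facets \<sigma>}"
    proof -
      have "\<tau> \<in> facets (insert w \<sigma>) \<longleftrightarrow> \<tau>' \<in> facets \<sigma>" if "\<sigma> \<in> c" for \<sigma>
      proof
        assume "\<tau> \<in> facets (insert w \<sigma>)"
        then obtain y where y: "y \<in> insert w \<sigma>" "\<tau> = insert w \<sigma> - {y}" unfolding facets_def by auto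
        have yw: "y \<noteq> w" using y(2) True by blast
        have ys: "y \<in> \<sigma>" using y(1) yw by blast
        have "\<tau>' = \<sigma> - {y}" unfolding \<tau>'_def using y(2) yw assms(2)[OF that] by blast
        then show "\<tau>' \<in> facets \<sigma>" unfolding facets_def using ys by blast
      next
        assume "\<tau>' \<in> facets \<sigma>"
        then obtain y where y: "y \<in> \<sigma>" "\<tau>' = \<sigma> - {y}" unfolding facets_def by auto
        then have "y \<noteq> w" using assms(2)[OF that] by auto
        then have "\<tau> = insert w \<sigma> - {y}" using y tt by auto
        then show "\<tau> \<in> facets (insert w \<sigma>)" unfolding facets_def using y by auto
      qed
      then show ?thesis unfolding cone_def by (auto simp: image_iff)
    qed
    then have "card {\<rho>\<in>cone w c. \<tau> \<in> facets \<rho>} = card {\<sigma>\<in>c. \<tau>' \<in> facets \<sigma>}"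
      by (metis (no_types, lifting) card_image inj inj_on_subset mem_Collect_eq subsetI)
    moreover have "\<tau> \<notin> c" using True assms(2) by auto
    moreover have "\<tau> \<in> cone w (bd c) \<longleftrightarrow> \<tau>' \<in> bd c"
    proof
      assume "\<tau> \<in> cone w (bd c)"
      then obtain \<sigma> where "\<sigma> \<in> bd c" "\<tau> = insert w \<sigma>" unfolding cone_def by auto
      then show "\<tau>' \<in> bd c" using bdfree tt by (metis Diff_insert_absorb)
    next
      assume "\<tau>' \<in> bd c" then show "\<tau> \<in> cone w (bd c)" unfolding cone_def using tt by auto
    qed
    ultimately show ?thesis unfolding bd_def sds_def by simp
  qed
  then show ?thesis by blast
qed



definition acyc :: "'a set \<Rightarrow> ('a \<Rightarrow> 'a \<Rightarrow> bool) \<Rightarrow> nat \<Rightarrow> bool" where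
  "acyc W E m \<longleftrightarrow> (\<forall>k\<le>m. \<forall>z. finite z \<and> (\<forall>\<sigma>\<in>z. indep_set W E \<sigma> \<and> card \<sigma> = k) \<and> bd z = {}
      \<longrightarrow> (\<exists>b. finite b \<and> (\<forall>\<sigma>\<in>b. indep_set W E \<sigma> \<and> card \<sigma> = Suc k) \<and> bd b = z))"

lemma mem_cone:
  assumes "\<And>\<sigma>. \<sigma> \<in> A \<Longrightarrow> w \<notin> \<sigma>"
  shows "x \<in> cone w A \<longleftrightarrow> w \<in> x \<and> x - {w} \<in> A"
proof
  assume "x \<in> cone w A"
  then obtain \<sigma> where "\<sigma> \<in> A" "x = insert w \<sigma>" unfolding cone_def by blast
  then show "w \<in> x \<and> x - {w} \<in> A" using assms by (metis Diff_insert_absorb insertI1)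
next
  assume "w \<in> x \<and> x - {w} \<in> A"
  then show "x \<in> cone w A" unfolding cone_def by (metis image_eqI insert_Diff)
qed

lemma cone_sd:
  assumes "\<And>\<sigma>. \<sigma> \<in> A \<Longrightarrow> w \<notin> \<sigma>" "\<And>\<sigma>. \<sigma> \<in> B \<Longrightarrow> w \<notin> \<sigma>"
  shows "cone w (sd A B) = sd (cone w A) (cone w B)"
proof (rule set_eqI)
  fix x
  have "\<And>\<sigma>. \<sigma> \<in> sd A B \<Longrightarrow> w \<notin> \<sigma>" using assms by auto
  then have c: "x \<in> cone w (sd A B) \<longleftrightarrow> w \<in> x \<and> x - {w} \<in> sd A B" by (rule mem_cone)
  have a: "x \<in> cone w A \<longleftrightarrow> w \<in> x \<and> x - {w} \<in> A" using assms(1) by (rule mem_cone)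
  have b: "x \<in> cone w B \<longleftrightarrow> w \<in> x \<and> x - {w} \<in> B" using assms(2) by (rule mem_cone)
  show "x \<in> cone w (sd A B) \<longleftrightarrow> x \<in> sd (cone w A) (cone w B)"
    unfolding c mem_sd a b by blast
qed

lemma cone_empty[simp]: "cone w {} = {}" unfolding cone_def by simp

lemma finite_cone: "finite c \<Longrightarrow> finite (cone w c)" unfolding cone_def by simp

lemma acyc_isolated:
  assumes W: "finite W" and w: "w \<in> W" and iso: "\<And>y. y \<in> W \<Longrightarrow> \<not> E w y \<and> \<not> E y w"
  shows "acyc W E m"
  unfolding acyc_def
proof (intro allI impI)
  fix k z
  assume k: "k \<le> m" and hz: "finite z \<and> (\<forall>\<sigma>\<in>z. indep_set W E \<sigma> \<and> card \<sigma> = k) \<and> bd z = {}"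
  define z0 where "z0 = {\<sigma>\<in>z. w \<notin> \<sigma>}"
  define z1 where "z1 = (\<lambda>\<sigma>. \<sigma> - {w}) ` {\<sigma>\<in>z. w \<in> \<sigma>}"
  have fz0: "finite z0" "finite z1" using hz unfolding z0_def z1_def by auto
  have z0w: "\<And>\<sigma>. \<sigma> \<in> z0 \<Longrightarrow> w \<notin> \<sigma>" unfolding z0_def by auto
  have z1w: "\<And>\<sigma>. \<sigma> \<in> z1 \<Longrightarrow> w \<notin> \<sigma>" unfolding z1_def by auto
  have cz1: "cone w z1 = {\<sigma>\<in>z. w \<in> \<sigma>}"
  proof (rule set_eqI)
    fix x
    have "x \<in> cone w z1 \<longleftrightarrow> w \<in> x \<and> x - {w} \<in> z1" using mem_cone[of z1 w x] z1w by blast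
    also have "\<dots> \<longleftrightarrow> x \<in> z \<and> w \<in> x"
    proof
      assume "w \<in> x \<and> x - {w} \<in> z1"
      then obtain \<sigma> where "\<sigma> \<in> z" "w \<in> \<sigma>" "x - {w} = \<sigma> - {w}" "w \<in> x" unfolding z1_def by blast
      then have "x = \<sigma>" by (metis insert_Diff)
      then show "x \<in> z \<and> w \<in> x" using \<open>\<sigma> \<in> z\<close> \<open>w \<in> x\<close> by simp
    next
      assume "x \<in> z \<and> w \<in> x"
      then show "w \<in> x \<and> x - {w} \<in> z1" unfolding z1_def by blast
    qed
    finally show "x \<in> cone w z1 \<longleftrightarrow> x \<in> {\<sigma>\<in>z. w \<in> \<sigma>}" by simp
  qed
  have zsplit: "z = sd z0 (cone w z1)"
  proof (rule set_eqI)
    fix x show "x \<in> z \<longleftrightarrow> x \<in> sd z0 (cone w z1)" unfolding cz1 z0_def by auto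
  qed
  have "bd z = sd (bd z0) (sd z1 (cone w (bd z1)))"
    using zsplit fz0 by (simp add: bd_sd finite_cone bd_cone z1w)
  then have e: "sd (bd z0) (sd z1 (cone w (bd z1))) = {}" using hz by simp
  have bz0: "bd z0 = z1"
  proof (rule set_eqI)
    fix \<tau>
    show "\<tau> \<in> bd z0 \<longleftrightarrow> \<tau> \<in> z1"
    proof (cases "w \<in> \<tau>")
      case True
      have "\<tau> \<notin> bd z0" using mem_bd z0w True by fastforce
      then show ?thesis using z1w True by auto
    next
      case False
      then have "\<tau> \<notin> cone w (bd z1)" unfolding cone_def by auto
      then show ?thesis using e by (metis empty_iff mem_sd)
    qed
  qed
  show "\<exists>b. finite b \<and> (\<forall>\<sigma>\<in>b. indep_set W E \<sigma> \<and> card \<sigma> = Suc k) \<and> bd b = z"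
  proof (intro exI conjI)
    show "finite (cone w z0)" using fz0 by (simp add: finite_cone)
    show "bd (cone w z0) = z" using fz0 z0w bz0 zsplit by (simp add: bd_cone)
    show "\<forall>\<sigma>\<in>cone w z0. indep_set W E \<sigma> \<and> card \<sigma> = Suc k"
    proof
      fix \<rho> assume "\<rho> \<in> cone w z0"
      then obtain \<sigma> where s: "\<sigma> \<in> z0" "\<rho> = insert w \<sigma>" unfolding cone_def by auto
      have si: "indep_set W E \<sigma>" "card \<sigma> = k" using s hz unfolding z0_def by auto
      have fs: "finite \<sigma>" using si W unfolding indep_set_def by (meson finite_subset)
      have "indep_set W E (insert w \<sigma>)" using si w iso unfolding indep_set_def by blast
      moreover have "card (insert w \<sigma>) = Suc k" using fs si z0w[OF s(1)] by simp
      ultimately show "indep_set W E \<rho> \<and> card \<rho> = Suc k" using s by simp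
    qed
  qed
qed

lemma acycD:
  assumes "acyc W E m" "k \<le> m" "finite z" "\<And>\<sigma>. \<sigma> \<in> z \<Longrightarrow> indep_set W E \<sigma> \<and> card \<sigma> = k" "bd z = {}"
  shows "\<exists>b. finite b \<and> (\<forall>\<sigma>\<in>b. indep_set W E \<sigma> \<and> card \<sigma> = Suc k) \<and> bd b = z"
proof -
  have "\<forall>z. finite z \<and> (\<forall>\<sigma>\<in>z. indep_set W E \<sigma> \<and> card \<sigma> = k) \<and> bd z = {}
      \<longrightarrow> (\<exists>b. finite b \<and> (\<forall>\<sigma>\<in>b. indep_set W E \<sigma> \<and> card \<sigma> = Suc k) \<and> bd b = z)"
    using assms(1,2) unfolding acyc_def by simp
  then show ?thesis using assms(3-5) by simp
qed


definition edel :: "('a \<Rightarrow> 'a \<Rightarrow> bool) \<Rightarrow> 'a \<Rightarrow> 'a \<Rightarrow> 'a \<Rightarrow> 'a \<Rightarrow> bool" where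
  "edel E u v = (\<lambda>x y. E x y \<and> \<not> ({x, y} = {u, v}))"

lemma indep_mono_E: "indep_set W E \<sigma> \<Longrightarrow> (\<And>x y. E' x y \<Longrightarrow> E x y) \<Longrightarrow> indep_set W E' \<sigma>"
  unfolding indep_set_def by blast

lemma acyc_edge:
  assumes W: "finite W" and sym: "\<And>x y. E x y \<Longrightarrow> E y x" and irr: "\<And>x. \<not> E x x"
    and u: "u \<in> W" and v: "v \<in> W" and uv: "E u v"
    and A1: "acyc W (edel E u v) m"
    and A2: "m > 0 \<Longrightarrow> acyc {x\<in>W. \<not> E u x \<and> \<not> E v x} E (m - 1)"
  shows "acyc W E m"
  unfolding acyc_def
proof (intro allI impI)
  fix k z
  assume k: "k \<le> m" and hz: "finite z \<and> (\<forall>\<sigma>\<in>z. indep_set W E \<sigma> \<and> card \<sigma> = k) \<and> bd z = {}"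
  define E' where "E' = edel E u v"
  define W' where "W' = {x\<in>W. \<not> E u x \<and> \<not> E v x}"
  have E'E: "\<And>x y. E' x y \<Longrightarrow> E x y" unfolding E'_def edel_def by auto
  have une: "u \<noteq> v" using uv irr by auto
  have "\<exists>b. finite b \<and> (\<forall>\<sigma>\<in>b. indep_set W E' \<sigma> \<and> card \<sigma> = Suc k) \<and> bd b = z"
    using acycD[of W E' m k z] A1 k hz indep_mono_E E'E unfolding E'_def by blast
  then obtain b where b: "finite b" "\<And>\<sigma>. \<sigma> \<in> b \<Longrightarrow> indep_set W E' \<sigma> \<and> card \<sigma> = Suc k" "bd b = z"
    by blast
  define b2 where "b2 = {\<sigma>\<in>b. u \<in> \<sigma> \<and> v \<in> \<sigma>}"
  define b1 where "b1 = b - b2"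
  have fb: "finite b1" "finite b2" using b(1) unfolding b1_def b2_def by auto
  have b1E: "\<And>\<sigma>. \<sigma> \<in> b1 \<Longrightarrow> indep_set W E \<sigma> \<and> card \<sigma> = Suc k"
  proof -
    fix \<sigma> assume s: "\<sigma> \<in> b1"
    then have s': "indep_set W E' \<sigma>" "card \<sigma> = Suc k" "\<not> (u \<in> \<sigma> \<and> v \<in> \<sigma>)"
      using b(2) unfolding b1_def b2_def by auto
    have "indep_set W E \<sigma>" unfolding indep_set_def
    proof (intro conjI ballI)
      show "\<sigma> \<subseteq> W" using s' unfolding indep_set_def by auto
      fix x y assume xy: "x \<in> \<sigma>" "y \<in> \<sigma>"
      show "\<not> E x y"
      proof
        assume "E x y"
        moreover have "\<not> E' x y" using s' xy unfolding indep_set_def by auto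
        ultimately have "{x, y} = {u, v}" unfolding E'_def edel_def by auto
        then have "u \<in> \<sigma> \<and> v \<in> \<sigma>" using xy by (metis insert_iff doubleton_eq_iff)
        then show False using s' by auto
      qed
    qed
    then show "indep_set W E \<sigma> \<and> card \<sigma> = Suc k" using s' by auto
  qed
  show "\<exists>b. finite b \<and> (\<forall>\<sigma>\<in>b. indep_set W E \<sigma> \<and> card \<sigma> = Suc k) \<and> bd b = z"
  proof (cases "b2 = {}")
    case True
    then have "b1 = b" unfolding b1_def by auto
    then show ?thesis using b b1E by metis
  next
    case False
    define C where "C = (\<lambda>\<sigma>. \<sigma> - {u, v}) ` b2"
    have fC: "finite C" using fb unfolding C_def by auto
    have Cuv: "\<And>\<tau>. \<tau> \<in> C \<Longrightarrow> u \<notin> \<tau> \<and> v \<notin> \<tau>" unfolding C_def by auto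
    have CW: "\<And>\<tau>. \<tau> \<in> C \<Longrightarrow> indep_set W' E \<tau> \<and> card \<tau> = k - 1 \<and> k \<ge> 1"
    proof -
      fix \<tau> assume "\<tau> \<in> C"
      then obtain \<sigma> where s: "\<sigma> \<in> b" "u \<in> \<sigma>" "v \<in> \<sigma>" "\<tau> = \<sigma> - {u, v}" unfolding C_def b2_def by auto
      have si: "indep_set W E' \<sigma>" "card \<sigma> = Suc k" using b(2) s(1) by auto
      have fs: "finite \<sigma>" using si W unfolding indep_set_def by (meson finite_subset)
      have uvs: "{u, v} \<subseteq> \<sigma>" using s by blast
      have c2: "card {u, v} = 2" using une by simp
      have "card \<tau> = card \<sigma> - card {u, v}" unfolding s(4) using fs uvs by (meson card_Diff_subset finite_subset)
      then have c: "card \<tau> = k - 1" using si c2 by simp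
      have "card {u, v} \<le> card \<sigma>" using uvs fs by (rule card_mono[rotated])
      then have "card \<sigma> \<ge> 2" using c2 by simp
      then have k1: "k \<ge> 1" using si by simp
      have "indep_set W' E \<tau>" unfolding indep_set_def
      proof (intro conjI ballI)
        show "\<tau> \<subseteq> W'"
        proof
          fix x assume x: "x \<in> \<tau>"
          then have xs: "x \<in> \<sigma>" "x \<noteq> u" "x \<noteq> v" using s by auto
          have "\<not> E' u x" "\<not> E' v x" using si xs s unfolding indep_set_def by auto
          moreover have "{u, x} \<noteq> {u, v}" "{v, x} \<noteq> {u, v}" using xs une
            by (metis doubleton_eq_iff)+
          ultimately have "\<not> E u x" "\<not> E v x" unfolding E'_def edel_def by auto
          moreover have "x \<in> W" using si xs unfolding indep_set_def by auto
          ultimately show "x \<in> W'" unfolding W'_def by auto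
        qed
        fix x y assume "x \<in> \<tau>" "y \<in> \<tau>"
        then have "x \<in> \<sigma>" "y \<in> \<sigma>" using s by auto
        then have "\<not> E' x y" using si unfolding indep_set_def by auto
        moreover have "{x, y} \<noteq> {u, v}" using \<open>x \<in> \<tau>\<close> \<open>y \<in> \<tau>\<close> s by (metis Diff_iff insertI1 insert_commute)
        ultimately show "\<not> E x y" unfolding E'_def edel_def by auto
      qed
      then show "indep_set W' E \<tau> \<and> card \<tau> = k - 1 \<and> k \<ge> 1" using c k1 by auto
    qed
    have k1: "k \<ge> 1" using False CW unfolding C_def by auto
    have b2C: "b2 = cone u (cone v C)"
    proof (rule set_eqI)
      fix x
      have cv: "\<And>\<sigma>. \<sigma> \<in> cone v C \<Longrightarrow> u \<notin> \<sigma>" using Cuv une unfolding cone_def by auto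
      have "x \<in> cone u (cone v C) \<longleftrightarrow> u \<in> x \<and> x - {u} \<in> cone v C" using cv by (rule mem_cone)
      also have "\<dots> \<longleftrightarrow> u \<in> x \<and> v \<in> x - {u} \<and> x - {u} - {v} \<in> C"
      proof -
        have "x - {u} \<in> cone v C \<longleftrightarrow> v \<in> x - {u} \<and> x - {u} - {v} \<in> C"
          by (rule mem_cone) (use Cuv in blast)
        then show ?thesis by (simp only:)
      qed
      also have "\<dots> \<longleftrightarrow> x \<in> b2"
      proof
        assume h: "u \<in> x \<and> v \<in> x - {u} \<and> x - {u} - {v} \<in> C"
        then have "x - {u} - {v} \<in> C" by blast
        then obtain \<sigma> where s: "\<sigma> \<in> b2" "x - {u} - {v} = \<sigma> - {u, v}" unfolding C_def by blast
        have "u \<in> \<sigma>" "v \<in> \<sigma>" using s unfolding b2_def by auto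
        have x1: "x = insert u (insert v (x - {u} - {v}))" using h by blast
        have x2: "\<sigma> = insert u (insert v (\<sigma> - {u, v}))" using \<open>u \<in> \<sigma>\<close> \<open>v \<in> \<sigma>\<close> by blast
        have "x = \<sigma>" using x1 x2 s(2) by (metis Diff_insert2)
        then show "x \<in> b2" using s by simp
      next
        assume "x \<in> b2"
        then have xx: "u \<in> x" "v \<in> x" unfolding b2_def by auto
        have "x - {u, v} \<in> C" unfolding C_def using \<open>x \<in> b2\<close> by (rule imageI)
        moreover have "x - {u} - {v} = x - {u, v}" by blast
        ultimately have "x - {u} - {v} \<in> C" by simp
        then show "u \<in> x \<and> v \<in> x - {u} \<and> x - {u} - {v} \<in> C" using xx une by blast
      qed
      finally show "x \<in> b2 \<longleftrightarrow> x \<in> cone u (cone v C)" by simp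
    qed
    have bsplit: "b = sd b1 b2" unfolding b1_def b2_def by auto
    have cvu: "\<And>\<sigma>. \<sigma> \<in> cone v C \<Longrightarrow> u \<notin> \<sigma>" using Cuv une unfolding cone_def by auto
    have bdCfree: "\<And>\<sigma>. \<sigma> \<in> bd C \<Longrightarrow> u \<notin> \<sigma> \<and> v \<notin> \<sigma>" using mem_bd Cuv by fastforce
    have bdb2: "bd b2 = sd (cone v C) (sd (cone u C) (cone u (cone v (bd C))))"
    proof -
      have "bd b2 = sd (cone v C) (cone u (bd (cone v C)))"
        unfolding b2C using fC cvu by (simp add: bd_cone finite_cone)
      also have "bd (cone v C) = sd C (cone v (bd C))" using fC Cuv by (simp add: bd_cone)
      also have "cone u (sd C (cone v (bd C))) = sd (cone u C) (cone u (cone v (bd C)))"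
        apply (rule cone_sd) using Cuv bdCfree une unfolding cone_def by auto
      finally show ?thesis .
    qed
    have bdb: "bd b = sd (bd b1) (sd (cone v C) (sd (cone u C) (cone u (cone v (bd C)))))"
      using bsplit fb bdb2 by (metis bd_sd)
    have bdC: "bd C = {}"
    proof (rule ccontr)
      assume "bd C \<noteq> {}"
      then obtain \<tau> where t: "\<tau> \<in> bd C" by auto
      define \<rho> where "\<rho> = insert u (insert v \<tau>)"
      have r1: "\<rho> \<in> cone u (cone v (bd C))" unfolding \<rho>_def cone_def using t by auto
      have r2: "\<rho> \<notin> bd b1"
      proof
        assume "\<rho> \<in> bd b1"
        then obtain \<sigma> x where "\<sigma> \<in> b1" "\<rho> = \<sigma> - {x}" using mem_bd by blast
        then show False unfolding b1_def b2_def \<rho>_def by auto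
      qed
      have r3: "\<rho> \<notin> cone v C"
      proof
        have cvr: "\<rho> \<in> cone v C \<longleftrightarrow> v \<in> \<rho> \<and> \<rho> - {v} \<in> C" by (rule mem_cone) (use Cuv in blast)
        assume "\<rho> \<in> cone v C"
        then have "\<rho> - {v} \<in> C" using cvr by blast
        moreover have "u \<in> \<rho> - {v}" using une unfolding \<rho>_def by blast
        ultimately show False using Cuv by blast
      qed
      have r4: "\<rho> \<notin> cone u C"
      proof
        have cvr: "\<rho> \<in> cone u C \<longleftrightarrow> u \<in> \<rho> \<and> \<rho> - {u} \<in> C" by (rule mem_cone) (use Cuv in blast)
        assume "\<rho> \<in> cone u C"
        then have "\<rho> - {u} \<in> C" using cvr by blast
        moreover have "v \<in> \<rho> - {u}" using une unfolding \<rho>_def by blast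
        ultimately show False using Cuv by blast
      qed
      have "\<rho> \<in> z" using r1 r2 r3 r4 bdb b(3) by auto
      then have "indep_set W E \<rho>" using hz by auto
      then show False unfolding \<rho>_def indep_set_def using uv by auto
    qed
    have "m > 0" using k k1 by auto
    then have A2': "acyc W' E (m - 1)" using A2 unfolding W'_def by auto
    have "\<exists>D. finite D \<and> (\<forall>\<tau>\<in>D. indep_set W' E \<tau> \<and> card \<tau> = Suc (k - 1)) \<and> bd D = C"
      using acycD[of W' E "m - 1" "k - 1" C] A2' k fC CW bdC by simp
    then obtain D where D: "finite D" "\<And>\<tau>. \<tau> \<in> D \<Longrightarrow> indep_set W' E \<tau> \<and> card \<tau> = Suc (k - 1)" "bd D = C"
      by blast
    have DW': "\<And>\<tau>. \<tau> \<in> D \<Longrightarrow> \<tau> \<subseteq> W'" using D(2) unfolding indep_set_def by auto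
    have uW': "u \<notin> W'" "v \<notin> W'" unfolding W'_def using uv sym by auto
    have Du: "\<And>\<tau>. \<tau> \<in> D \<Longrightarrow> u \<notin> \<tau> \<and> v \<notin> \<tau>" using DW' uW' by auto
    define b' where "b' = sd b1 (sd (cone u D) (cone v D))"
    show ?thesis
    proof (intro exI conjI)
      show "finite b'" unfolding b'_def using fb D(1) by (simp add: finite_cone finite_sd)
      have "bd b' = sd (bd b1) (sd (bd (cone u D)) (bd (cone v D)))"
        unfolding b'_def using fb D(1) by (simp add: bd_sd finite_cone finite_sd)
      also have "bd (cone u D) = sd D (cone u C)" using D Du by (simp add: bd_cone)
      also have "bd (cone v D) = sd D (cone v C)" using D Du by (simp add: bd_cone)
      finally have "bd b' = sd (bd b1) (sd (sd D (cone u C)) (sd D (cone v C)))" .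
      also have "\<dots> = bd b" unfolding bdb bdC by (rule set_eqI) (simp, blast)
      finally show "bd b' = z" using b(3) by simp
      show "\<forall>\<sigma>\<in>b'. indep_set W E \<sigma> \<and> card \<sigma> = Suc k"
      proof
        fix \<sigma> assume s: "\<sigma> \<in> b'"
        have cw: "indep_set W E (insert w \<tau>) \<and> card (insert w \<tau>) = Suc k"
          if w: "w = u \<or> w = v" and t: "\<tau> \<in> D" for w \<tau>
        proof -
          have ti: "indep_set W' E \<tau>" "card \<tau> = k" using D(2)[OF t] k1 by auto
          have wW: "w \<in> W" using w u v by auto
          have nw: "\<And>y. y \<in> \<tau> \<Longrightarrow> \<not> E w y \<and> \<not> E y w"
            using DW'[OF t] w sym unfolding W'_def by blast
          have tW: "\<tau> \<subseteq> W" using ti unfolding indep_set_def W'_def by auto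
          have "insert w \<tau> \<subseteq> W" using tW wW by blast
          moreover have "\<forall>x\<in>insert w \<tau>. \<forall>y\<in>insert w \<tau>. \<not> E x y"
          proof (intro ballI)
            fix x y assume x: "x \<in> insert w \<tau>" and y: "y \<in> insert w \<tau>"
            have ti': "\<And>x y. x \<in> \<tau> \<Longrightarrow> y \<in> \<tau> \<Longrightarrow> \<not> E x y" using ti(1) unfolding indep_set_def by blast
            show "\<not> E x y"
            proof (cases "x = w")
              case True
              then show ?thesis using y irr nw by (cases "y = w") auto
            next
              case False
              then have "x \<in> \<tau>" using x by simp
              then show ?thesis using y nw ti' by (cases "y = w") auto
            qed
          qed
          ultimately have "indep_set W E (insert w \<tau>)" unfolding indep_set_def by (rule conjI)
          moreover have "finite \<tau>" using tW W by (rule finite_subset)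
          moreover have "w \<notin> \<tau>" using Du[OF t] w by auto
          ultimately show ?thesis using ti by simp
        qed
        have "\<sigma> \<in> b1 \<or> \<sigma> \<in> cone u D \<or> \<sigma> \<in> cone v D" using s unfolding b'_def by auto
        then show "indep_set W E \<sigma> \<and> card \<sigma> = Suc k"
        proof (elim disjE)
          assume "\<sigma> \<in> b1" then show ?thesis using b1E by blast
        next
          assume "\<sigma> \<in> cone u D"
          then obtain \<tau> where "\<tau> \<in> D" "\<sigma> = insert u \<tau>" unfolding cone_def by blast
          then show ?thesis using cw[of u \<tau>] by simp
        next
          assume "\<sigma> \<in> cone v D"
          then obtain \<tau> where "\<tau> \<in> D" "\<sigma> = insert v \<tau>" unfolding cone_def by blast
          then show ?thesis using cw[of v \<tau>] by simp
        qed
      qed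
    qed
  qed
qed



definition ecount :: "'a set \<Rightarrow> ('a \<Rightarrow> 'a \<Rightarrow> bool) \<Rightarrow> nat" where
  "ecount W E = card {(x, y). x \<in> W \<and> y \<in> W \<and> E x y}"

lemma ecount_less:
  assumes "finite W" "u \<in> W" "v \<in> W" "E u v" "\<not> (W' \<subseteq> W \<and> u \<in> W' \<and> v \<in> W' \<and> E' u v)"
    "W' \<subseteq> W" "\<And>x y. E' x y \<Longrightarrow> E x y"
  shows "ecount W' E' < ecount W E"
proof -
  have s1: "{(x, y). x \<in> W' \<and> y \<in> W' \<and> E' x y} \<subseteq> {(x, y). x \<in> W \<and> y \<in> W \<and> E x y}"
    using assms(6,7) by auto
  have s2: "(u, v) \<in> {(x, y). x \<in> W \<and> y \<in> W \<and> E x y}" using assms(2-4) by simp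
  have s3: "(u, v) \<notin> {(x, y). x \<in> W' \<and> y \<in> W' \<and> E' x y}" using assms(5,6) by simp
  have s: "{(x, y). x \<in> W' \<and> y \<in> W' \<and> E' x y} \<subset> {(x, y). x \<in> W \<and> y \<in> W \<and> E x y}"
    using s1 s2 s3 by blast
  have "finite {(x, y). x \<in> W \<and> y \<in> W \<and> E x y}"
    by (rule finite_subset[of _ "W \<times> W"]) (use assms(1) in auto)
  then show ?thesis unfolding ecount_def using s by (simp add: psubset_card_mono)
qed

lemma edel_sym: "(\<And>x y. E x y \<Longrightarrow> E y x) \<Longrightarrow> edel E u v x y \<Longrightarrow> edel E u v y x"
  unfolding edel_def by (auto simp: insert_commute)

lemma edel_irr: "(\<And>x. \<not> E x x) \<Longrightarrow> \<not> edel E u v x x"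
  unfolding edel_def by auto

lemma edel_E: "edel E u v x y \<Longrightarrow> E x y"
  unfolding edel_def by auto

lemma edel_uv: "\<not> edel E u v u v"
  unfolding edel_def by auto

lemma acyc_tg:
  assumes "finite W" "\<And>x y. E x y \<Longrightarrow> E y x" "\<And>x. \<not> E x x"
    "\<And>X. X \<subseteq> W \<Longrightarrow> card X \<le> 2 * m \<Longrightarrow> \<not> (\<forall>y\<in>W. \<exists>x\<in>X. E x y)"
  shows "acyc W E m"
  using assms
proof (induction "ecount W E" arbitrary: W E m rule: less_induct)
  case less
  note W = less.prems(1) and sym = less.prems(2) and irr = less.prems(3) and dom = less.prems(4)
  have "W \<noteq> {}" using dom[of "{}"] by auto
  then obtain w where w: "w \<in> W" by auto
  show ?case
  proof (cases "\<exists>v\<in>W. E w v")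
    case False
    show ?thesis by (rule acyc_isolated[OF W w]) (use False sym in blast)
  next
    case True
    then obtain v where v: "v \<in> W" "E w v" by blast
    show ?thesis
    proof (rule acyc_edge[OF W sym irr w v(1) v(2)])
      show "acyc W (edel E w v) m"
      proof (rule less.hyps)
        show "ecount W (edel E w v) < ecount W E"
          by (rule ecount_less[of W w v E W "edel E w v"]) (use W w v edel_uv[of E w v] edel_E[of E w v] in auto)
        show "finite W" by (rule W)
        show "\<And>x y. edel E w v x y \<Longrightarrow> edel E w v y x" using sym by (rule edel_sym)
        show "\<And>x. \<not> edel E w v x x" using irr by (rule edel_irr)
        fix X assume X: "X \<subseteq> W" "card X \<le> 2 * m"
        show "\<not> (\<forall>y\<in>W. \<exists>x\<in>X. edel E w v x y)" using dom[OF X] edel_E[of E w v] by metis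
      qed
      assume m: "0 < m"
      define W' where "W' = {x \<in> W. \<not> E w x \<and> \<not> E v x}"
      have "acyc W' E (m - 1)"
      proof (rule less.hyps)
        have "w \<notin> W'" unfolding W'_def using v sym by auto
        show "ecount W' E < ecount W E"
          by (rule ecount_less[of W w v E W' E]) (use W w v \<open>w \<notin> W'\<close> in \<open>auto simp: W'_def\<close>)
        show "finite W'" using W unfolding W'_def by auto
        show "\<And>x y. E x y \<Longrightarrow> E y x" by (rule sym)
        show "\<And>x. \<not> E x x" by (rule irr)
        fix X assume X: "X \<subseteq> W'" "card X \<le> 2 * (m - 1)"
        show "\<not> (\<forall>y\<in>W'. \<exists>x\<in>X. E x y)"
        proof
          assume d: "\<forall>y\<in>W'. \<exists>x\<in>X. E x y"
          have "insert w (insert v X) \<subseteq> W" using X w v unfolding W'_def by auto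
          moreover have "card (insert w (insert v X)) \<le> 2 * m"
          proof -
            have "X \<subseteq> W" using X unfolding W'_def by blast
            then have "finite X" using W by (rule finite_subset)
            then have "card (insert v X) \<le> Suc (card X)" by (simp add: card_insert_if)
            moreover have "card (insert w (insert v X)) \<le> Suc (card (insert v X))"
              using \<open>finite X\<close> by (simp add: card_insert_if)
            ultimately have "card (insert w (insert v X)) \<le> card X + 2" by linarith
            then show ?thesis using X m by linarith
          qed
          moreover have "\<forall>y\<in>W. \<exists>x\<in>insert w (insert v X). E x y"
          proof
            fix y assume y: "y \<in> W"
            show "\<exists>x\<in>insert w (insert v X). E x y"
            proof (cases "y \<in> W'")
              case True then show ?thesis using d by blast
            next
              case False then have "E w y \<or> E v y" using y unfolding W'_def by auto
              then show ?thesis by blast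
            qed
          qed
          ultimately show False using dom[of "insert w (insert v X)"] by simp
        qed
      qed
      then show "acyc {x \<in> W. \<not> E w x \<and> \<not> E v x} E (m - 1)" unfolding W'_def .
    qed
  qed
qed

lemma acyc_ig:
  assumes "finite W" "\<And>x y. E x y \<Longrightarrow> E y x" "\<And>x. \<not> E x x" "indep_set W E S"
    "\<And>X. X \<subseteq> W \<Longrightarrow> card X \<le> m \<Longrightarrow> \<not> (\<forall>y\<in>S. \<exists>x\<in>X. E x y)"
  shows "acyc W E m"
  using assms
proof (induction "ecount W E" arbitrary: W E m S rule: less_induct)
  case less
  note W = less.prems(1) and sym = less.prems(2) and irr = less.prems(3) and S = less.prems(4)
    and dom = less.prems(5)
  have "S \<noteq> {}" using dom[of "{}"] by auto
  then obtain w where wS: "w \<in> S" by auto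
  have SW: "S \<subseteq> W" using S unfolding indep_set_def by blast
  then have w: "w \<in> W" using wS by blast
  have Sind: "\<And>x y. x \<in> S \<Longrightarrow> y \<in> S \<Longrightarrow> \<not> E x y" using S unfolding indep_set_def by blast
  show ?case
  proof (cases "\<exists>v\<in>W. E w v")
    case False
    show ?thesis by (rule acyc_isolated[OF W w]) (use False sym in blast)
  next
    case True
    then obtain v where v: "v \<in> W" "E w v" by blast
    show ?thesis
    proof (rule acyc_edge[OF W sym irr w v(1) v(2)])
      show "acyc W (edel E w v) m"
      proof (rule less.hyps)
        show "ecount W (edel E w v) < ecount W E"
          by (rule ecount_less[of W w v E W "edel E w v"]) (use W w v edel_uv[of E w v] edel_E[of E w v] in auto)
        show "finite W" by (rule W)
        show "\<And>x y. edel E w v x y \<Longrightarrow> edel E w v y x" using sym by (rule edel_sym)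
        show "\<And>x. \<not> edel E w v x x" using irr by (rule edel_irr)
        show "indep_set W (edel E w v) S" using S edel_E[of E w v] by (rule indep_mono_E)
        fix X assume X: "X \<subseteq> W" "card X \<le> m"
        show "\<not> (\<forall>y\<in>S. \<exists>x\<in>X. edel E w v x y)" using dom[OF X] edel_E[of E w v] by metis
      qed
      assume m: "0 < m"
      define W' where "W' = {x \<in> W. \<not> E w x \<and> \<not> E v x}"
      define S' where "S' = S \<inter> W'"
      have "acyc W' E (m - 1)"
      proof (rule less.hyps)
        have "w \<notin> W'" unfolding W'_def using v sym by auto
        show "ecount W' E < ecount W E"
          by (rule ecount_less[of W w v E W' E]) (use W w v \<open>w \<notin> W'\<close> in \<open>auto simp: W'_def\<close>)
        show "finite W'" using W unfolding W'_def by auto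
        show "\<And>x y. E x y \<Longrightarrow> E y x" by (rule sym)
        show "\<And>x. \<not> E x x" by (rule irr)
        show "indep_set W' E S'" using Sind unfolding S'_def indep_set_def by blast
        fix X assume X: "X \<subseteq> W'" "card X \<le> m - 1"
        show "\<not> (\<forall>y\<in>S'. \<exists>x\<in>X. E x y)"
        proof
          assume d: "\<forall>y\<in>S'. \<exists>x\<in>X. E x y"
          have XW: "X \<subseteq> W" using X unfolding W'_def by blast
          have "insert v X \<subseteq> W" using XW v by blast
          moreover have "card (insert v X) \<le> m"
          proof -
            have "finite X" using XW W by (rule finite_subset)
            then have "card (insert v X) \<le> Suc (card X)" by (simp add: card_insert_if)
            then show ?thesis using X m by linarith
          qed
          moreover have "\<forall>y\<in>S. \<exists>x\<in>insert v X. E x y"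
          proof
            fix y assume y: "y \<in> S"
            show "\<exists>x\<in>insert v X. E x y"
            proof (cases "y \<in> W'")
              case True then have "y \<in> S'" using y unfolding S'_def by blast
              then show ?thesis using d by blast
            next
              case False then have "E w y \<or> E v y" using y SW unfolding W'_def by auto
              moreover have "\<not> E w y" using Sind wS y by blast
              ultimately show ?thesis by blast
            qed
          qed
          ultimately show False using dom[of "insert v X"] by simp
        qed
      qed
      then show "acyc {x \<in> W. \<not> E w x \<and> \<not> E v x} E (m - 1)" unfolding W'_def .
    qed
  qed
qed



lemma part_disj:
  assumes "is_partition V n P" "i < n" "j < n" "i \<noteq> j" "x \<in> P i"
  shows "x \<notin> P j"
  using assms unfolding is_partition_def by blast

lemma it_single:
  assumes "indep_transversal V E n P T" "i < n"
  obtains t where "T \<inter> P i = {t}"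
  using assms unfolding indep_transversal_def by (meson card_1_singletonE)

lemma VI_mono: "I \<subseteq> J \<Longrightarrow> parts_union P I \<subseteq> parts_union P J"
  unfolding parts_union_def by blast

lemma VI_all: "is_partition V n P \<Longrightarrow> parts_union P {..<n} = V"
  unfolding parts_union_def is_partition_def by blast

lemma it_sub: "indep_transversal V E n P T \<Longrightarrow> T \<subseteq> V"
  unfolding indep_transversal_def indep_set_def by blast

lemma it_card:
  assumes part: "is_partition V n P" and T: "indep_transversal V E n P T" and I: "I \<subseteq> {..<n}"
  shows "card (T \<inter> parts_union P I) = card I"
proof -
  have fI: "finite I" using I finite_subset by blast
  have e: "T \<inter> parts_union P I = (\<Union>i\<in>I. T \<inter> P i)" unfolding parts_union_def by blast
  have "card (\<Union>i\<in>I. T \<inter> P i) = (\<Sum>i\<in>I. card (T \<inter> P i))"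
  proof (rule card_UN_disjoint[OF fI])
    show "\<forall>i\<in>I. finite (T \<inter> P i)"
    proof
      fix i assume "i \<in> I"
      then obtain t where "T \<inter> P i = {t}" using it_single[OF T] I by blast
      then show "finite (T \<inter> P i)" by simp
    qed
    show "\<forall>i\<in>I. \<forall>j\<in>I. i \<noteq> j \<longrightarrow> T \<inter> P i \<inter> (T \<inter> P j) = {}"
      using part I unfolding is_partition_def by blast
  qed
  also have "\<dots> = (\<Sum>i\<in>I. 1)"
    by (rule sum.cong) (use T I in \<open>auto simp: indep_transversal_def\<close>)
  finally show ?thesis using e by simp
qed

lemma it_del:
  assumes part: "is_partition V n P" and I: "I \<subseteq> {..<n}" and i: "i \<in> I"
  shows "T \<inter> parts_union P (I - {i}) = (T \<inter> parts_union P I) - P i"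
proof -
  have "\<And>x j. j \<in> I - {i} \<Longrightarrow> x \<in> P j \<Longrightarrow> x \<notin> P i"
    using part_disj[OF part] I i by blast
  then show ?thesis unfolding parts_union_def by blast
qed

lemma it_facets:
  assumes part: "is_partition V n P" and T: "indep_transversal V E n P T" and I: "I \<subseteq> {..<n}"
  shows "facets (T \<inter> parts_union P I) = sds (\<lambda>i. {T \<inter> parts_union P (I - {i})}) I"
proof -
  define X where "X = T \<inter> parts_union P I"
  have inj: "inj_on (\<lambda>i. T \<inter> parts_union P (I - {i})) I"
  proof (rule inj_onI)
    fix i j assume ij: "i \<in> I" "j \<in> I" "T \<inter> parts_union P (I - {i}) = T \<inter> parts_union P (I - {j})"
    show "i = j"
    proof (rule ccontr)
      assume "i \<noteq> j"
      obtain t where t: "T \<inter> P i = {t}" using it_single[OF T] I ij by blast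
      have "t \<in> T \<inter> parts_union P (I - {j})" using t ij \<open>i \<noteq> j\<close> unfolding parts_union_def by blast
      moreover have "t \<notin> T \<inter> parts_union P (I - {i})" using it_del[OF part I ij(1)] t by blast
      ultimately show False using ij by simp
    qed
  qed
  have "facets X = (\<lambda>i. T \<inter> parts_union P (I - {i})) ` I"
  proof (rule set_eqI)
    fix \<tau>
    show "\<tau> \<in> facets X \<longleftrightarrow> \<tau> \<in> (\<lambda>i. T \<inter> parts_union P (I - {i})) ` I"
    proof
      assume "\<tau> \<in> facets X"
      then obtain x where x: "x \<in> X" "\<tau> = X - {x}" unfolding facets_def by blast
      then obtain i where i: "i \<in> I" "x \<in> P i" unfolding X_def parts_union_def by blast
      obtain t where t: "T \<inter> P i = {t}" using it_single[OF T] I i by blast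
      have "t = x" using t x i unfolding X_def by (metis IntD1 IntI singletonD)
      have "T \<inter> parts_union P (I - {i}) = X - P i" unfolding X_def by (rule it_del[OF part I i(1)])
      also have "\<dots> = X - {x}" using t \<open>t = x\<close> unfolding X_def by blast
      finally show "\<tau> \<in> (\<lambda>i. T \<inter> parts_union P (I - {i})) ` I" using x i by auto
    next
      assume "\<tau> \<in> (\<lambda>i. T \<inter> parts_union P (I - {i})) ` I"
      then obtain i where i: "i \<in> I" "\<tau> = T \<inter> parts_union P (I - {i})" by blast
      obtain t where t: "T \<inter> P i = {t}" using it_single[OF T] I i by blast
      have tX: "t \<in> X" using t i unfolding X_def parts_union_def by blast
      have "\<tau> = X - P i" unfolding X_def i(2) by (rule it_del[OF part I i(1)])
      also have "\<dots> = X - {t}" using t unfolding X_def by blast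
      finally show "\<tau> \<in> facets X" unfolding facets_def using tX by blast
    qed
  qed
  then show ?thesis using sds_single_inj[OF inj] unfolding X_def by simp
qed

lemma indep_mono_W: "indep_set W E \<sigma> \<Longrightarrow> W \<subseteq> W2 \<Longrightarrow> indep_set W2 E \<sigma>"
  unfolding indep_set_def by blast

definition dinv :: "('a \<Rightarrow> 'a \<Rightarrow> bool) \<Rightarrow> (nat \<Rightarrow> 'a set) \<Rightarrow> 'a set \<Rightarrow> 'a set \<Rightarrow> (nat set \<Rightarrow> 'a set set) \<Rightarrow> nat set \<Rightarrow> bool" where
  "dinv E P T T' d J \<longleftrightarrow> finite (d J) \<and> (\<forall>\<sigma>\<in>d J. indep_set (parts_union P J) E \<sigma> \<and> card \<sigma> = Suc (card J))
     \<and> bd (d J) = sd (sds (\<lambda>i. d (J - {i})) J) (sd {T \<inter> parts_union P J} {T' \<inter> parts_union P J})"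

lemma step_exists:
  assumes part: "is_partition V n P" and T: "indep_transversal V E n P T" and T': "indep_transversal V E n P T'"
    and J: "J \<subseteq> {..<n}" "J \<noteq> {}" and A: "acyc (parts_union P J) E (card J)"
    and inv: "\<And>i. i \<in> J \<Longrightarrow> dinv E P T T' d (J - {i})"
  shows "\<exists>b. finite b \<and> (\<forall>\<sigma>\<in>b. indep_set (parts_union P J) E \<sigma> \<and> card \<sigma> = Suc (card J))
     \<and> bd b = sd (sds (\<lambda>i. d (J - {i})) J) (sd {T \<inter> parts_union P J} {T' \<inter> parts_union P J})"
proof -
  have fJ: "finite J" using J(1) finite_subset by blast
  define f where "f = (\<lambda>i. d (J - {i}))"
  define z where "z = sd (sds f J) (sd {T \<inter> parts_union P J} {T' \<inter> parts_union P J})"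
  have ff: "\<And>i. i \<in> J \<Longrightarrow> finite (f i)" using inv unfolding f_def dinv_def by blast
  have fs: "finite (sds f J)" using fJ ff by (rule finite_sds)
  have fz: "finite z" unfolding z_def using fs by (simp add: finite_sd)
  have cJ: "card J \<ge> 1" using fJ J(2) by (simp add: Suc_leI card_gt_0_iff)
  have tface: "indep_set (parts_union P J) E (X \<inter> parts_union P J) \<and> card (X \<inter> parts_union P J) = card J"
    if X: "indep_transversal V E n P X" for X
  proof
    show "indep_set (parts_union P J) E (X \<inter> parts_union P J)"
      using X unfolding indep_transversal_def indep_set_def by blast
    show "card (X \<inter> parts_union P J) = card J" by (rule it_card[OF part X J(1)])
  qed
  have faces: "\<forall>\<sigma>\<in>z. indep_set (parts_union P J) E \<sigma> \<and> card \<sigma> = card J"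
  proof
    fix \<sigma> assume "\<sigma> \<in> z"
    then have "\<sigma> \<in> sds f J \<or> \<sigma> = T \<inter> parts_union P J \<or> \<sigma> = T' \<inter> parts_union P J"
      unfolding z_def mem_sd by blast
    then show "indep_set (parts_union P J) E \<sigma> \<and> card \<sigma> = card J"
    proof (elim disjE)
      assume "\<sigma> \<in> sds f J"
      then obtain i where i: "i \<in> J" "\<sigma> \<in> d (J - {i})" using sds_subset[of f J] unfolding f_def by blast
      then have h1: "indep_set (parts_union P (J - {i})) E \<sigma>" and h2: "card \<sigma> = Suc (card (J - {i}))"
        using inv[OF i(1)] unfolding dinv_def by auto
      have "card (J - {i}) = card J - 1" using i(1) fJ by simp
      then have "card \<sigma> = card J" using h2 cJ by simp
      moreover have "parts_union P (J - {i}) \<subseteq> parts_union P J" by (rule VI_mono) blast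
      ultimately show ?thesis using indep_mono_W[OF h1] by blast
    next
      assume "\<sigma> = T \<inter> parts_union P J" then show ?thesis using tface[OF T] by simp
    next
      assume "\<sigma> = T' \<inter> parts_union P J" then show ?thesis using tface[OF T'] by simp
    qed
  qed
  have bdz: "bd z = {}"
  proof -
    have e1: "bd z = sd (bd (sds f J)) (sd (bd {T \<inter> parts_union P J}) (bd {T' \<inter> parts_union P J}))"
      unfolding z_def using fs by (simp add: bd_sd finite_sd)
    have e2: "bd (sds f J) = sds (\<lambda>i. bd (f i)) J" using fJ ff by (rule bd_sds)
    have e3: "sds (\<lambda>i. bd (f i)) J = sds (\<lambda>i. sd (sds (\<lambda>j. d (J - {i} - {j})) (J - {i}))
                 (sd {T \<inter> parts_union P (J - {i})} {T' \<inter> parts_union P (J - {i})})) J"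
    proof (rule sds_cong)
      fix i assume "i \<in> J"
      then show "bd (f i) = sd (sds (\<lambda>j. d (J - {i} - {j})) (J - {i}))
                 (sd {T \<inter> parts_union P (J - {i})} {T' \<inter> parts_union P (J - {i})})"
        using inv unfolding f_def dinv_def by blast
    qed
    have e4: "sds (\<lambda>i. sd (sds (\<lambda>j. d (J - {i} - {j})) (J - {i}))
                 (sd {T \<inter> parts_union P (J - {i})} {T' \<inter> parts_union P (J - {i})})) J
       = sd (sds (\<lambda>i. sds (\<lambda>j. d (J - {i} - {j})) (J - {i})) J)
            (sd (sds (\<lambda>i. {T \<inter> parts_union P (J - {i})}) J) (sds (\<lambda>i. {T' \<inter> parts_union P (J - {i})}) J))"
      using fJ by (simp add: sds_sd)
    have e5: "sds (\<lambda>i. sds (\<lambda>j. d (J - {i} - {j})) (J - {i})) J = {}"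
      by (rule sds_double[OF fJ, of "\<lambda>i j. d (J - {i} - {j})"]) (simp add: Diff_insert2[symmetric] insert_commute)
    have e6: "sds (\<lambda>i. {T \<inter> parts_union P (J - {i})}) J = bd {T \<inter> parts_union P J}"
      using it_facets[OF part T J(1)] by (simp add: bd_single)
    have e7: "sds (\<lambda>i. {T' \<inter> parts_union P (J - {i})}) J = bd {T' \<inter> parts_union P J}"
      using it_facets[OF part T' J(1)] by (simp add: bd_single)
    show ?thesis unfolding e1 e2 e3 e4 e5 e6 e7 by (rule set_eqI) simp
  qed
  have "\<exists>b. finite b \<and> (\<forall>\<sigma>\<in>b. indep_set (parts_union P J) E \<sigma> \<and> card \<sigma> = Suc (card J)) \<and> bd b = z"
    by (rule acycD[OF A le_refl fz]) (use faces bdz in auto)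
  then show ?thesis unfolding z_def f_def .
qed



lemma build:
  assumes part: "is_partition V n P" and T: "indep_transversal V E n P T" and T': "indep_transversal V E n P T'"
    and A: "\<And>I. I \<subseteq> {..<n} \<Longrightarrow> I \<noteq> {} \<Longrightarrow> acyc (parts_union P I) E (card I)"
  shows "\<exists>d. \<forall>J. J \<subseteq> {..<n} \<and> card J \<le> k \<longrightarrow> dinv E P T T' d J"
proof (induction k)
  case 0
  have "dinv E P T T' (\<lambda>_. {}) J" if "J \<subseteq> {..<n} \<and> card J \<le> 0" for J
  proof -
    have "finite J" using that finite_subset by blast
    then have "J = {}" using that by simp
    then show ?thesis unfolding dinv_def parts_union_def by (simp add: sd_def)
  qed
  then show ?case by blast
next
  case (Suc k)
  then obtain d where d: "\<And>J. J \<subseteq> {..<n} \<Longrightarrow> card J \<le> k \<Longrightarrow> dinv E P T T' d J" by blast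
  define good where "good = (\<lambda>J b. finite b \<and> (\<forall>\<sigma>\<in>b. indep_set (parts_union P J) E \<sigma> \<and> card \<sigma> = Suc (card J))
     \<and> bd b = sd (sds (\<lambda>i. d (J - {i})) J) (sd {T \<inter> parts_union P J} {T' \<inter> parts_union P J}))"
  define d' where "d' = (\<lambda>J. if card J = Suc k then (SOME b. good J b) else d J)"
  have "dinv E P T T' d' J" if J: "J \<subseteq> {..<n}" "card J \<le> Suc k" for J
  proof -
    have fJ: "finite J" using J finite_subset by blast
    have sub: "\<And>i. i \<in> J \<Longrightarrow> card (J - {i}) \<le> k" using fJ J(2) by (simp add: card_Diff_singleton)
    have eqsub: "\<And>i. i \<in> J \<Longrightarrow> d' (J - {i}) = d (J - {i})"
      unfolding d'_def using sub by (metis not_less_eq_eq order_refl)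
    have sdseq: "sds (\<lambda>i. d' (J - {i})) J = sds (\<lambda>i. d (J - {i})) J" by (rule sds_cong) (rule eqsub)
    show ?thesis
    proof (cases "card J = Suc k")
      case True
      then have "J \<noteq> {}" by auto
      have "\<exists>b. good J b" unfolding good_def
      proof (rule step_exists[OF part T T' J(1) \<open>J \<noteq> {}\<close>])
        show "acyc (parts_union P J) E (card J)" by (rule A[OF J(1) \<open>J \<noteq> {}\<close>])
        fix i assume "i \<in> J"
        then show "dinv E P T T' d (J - {i})" using d[of "J - {i}"] sub J(1) by blast
      qed
      then have "good J (d' J)" unfolding d'_def using True by (simp add: someI_ex)
      then show ?thesis unfolding dinv_def good_def sdseq .
    next
      case False
      then have "card J \<le> k" using J(2) by simp
      then have "dinv E P T T' d J" using d J(1) by blast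
      moreover have "d' J = d J" unfolding d'_def using False by simp
      ultimately show ?thesis unfolding dinv_def sdseq by simp
    qed
  qed
  then show ?case by blast
qed

lemma double_count:
  assumes "finite A" "finite B"
  shows "(\<Sum>a\<in>A. card {b\<in>B. R a b}) = (\<Sum>b\<in>B. card {a\<in>A. R a b})"
proof -
  have c: "\<And>S Q. finite S \<Longrightarrow> card {x\<in>S. Q x} = (\<Sum>x\<in>S. if Q x then 1 else 0)"
    by (simp add: sum.inter_filter[symmetric])
  have "(\<Sum>a\<in>A. card {b\<in>B. R a b}) = (\<Sum>a\<in>A. \<Sum>b\<in>B. if R a b then 1 else 0)"
    by (rule sum.cong[OF refl]) (rule c, rule assms(2))
  also have "\<dots> = (\<Sum>b\<in>B. \<Sum>a\<in>A. if R a b then 1 else 0)" by (rule sum.swap)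
  also have "\<dots> = (\<Sum>b\<in>B. card {a\<in>A. R a b})"
    by (rule sum.cong[OF refl]) (rule c[symmetric], rule assms(1))
  finally show ?thesis .
qed

lemma parity_sum:
  assumes "finite A"
  shows "even (\<Sum>a\<in>A. (f a :: nat)) \<longleftrightarrow> even (card {a\<in>A. odd (f a)})"
  using assms
proof (induction A rule: finite_induct)
  case empty
  then show ?case by simp
next
  case (insert x F)
  have e: "{a\<in>insert x F. odd (f a)} = (if odd (f x) then insert x {a\<in>F. odd (f a)} else {a\<in>F. odd (f a)})"
    by auto
  show ?case unfolding e using insert by (cases "odd (f x)") simp_all
qed



lemma facet_even:
  assumes part: "is_partition V n P" and s: "indep_set V E \<sigma>" "card \<sigma> = Suc n"
    and X: "X = {\<tau>. indep_transversal V E n P \<tau> \<and> (RG_adj V E n P)\<^sup>*\<^sup>* T \<tau>}"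
  shows "even (card (facets \<sigma> \<inter> X))"
proof (cases "facets \<sigma> \<inter> X = {}")
  case True
  then show ?thesis by simp
next
  case False
  then obtain \<tau>0 where t0: "\<tau>0 \<in> facets \<sigma>" "\<tau>0 \<in> X" by blast
  then obtain x where x: "x \<in> \<sigma>" "\<tau>0 = \<sigma> - {x}" unfolding facets_def by blast
  have t0IT: "indep_transversal V E n P \<tau>0" and t0r: "(RG_adj V E n P)\<^sup>*\<^sup>* T \<tau>0" using t0 X by auto
  have sV: "\<sigma> \<subseteq> V" using s unfolding indep_set_def by blast
  then obtain j where j: "j < n" "x \<in> P j" using x part unfolding is_partition_def by blast
  obtain y where y: "\<tau>0 \<inter> P j = {y}" using it_single[OF t0IT j(1)] by blast
  have yx: "y \<noteq> x" "y \<in> \<sigma>" using y x by auto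
  have ypj: "y \<in> P j" using y by auto
  define \<tau>1 where "\<tau>1 = \<sigma> - {y}"
  have t1IT: "indep_transversal V E n P \<tau>1"
    unfolding indep_transversal_def
  proof (intro conjI allI impI)
    show "indep_set V E \<tau>1" using s unfolding \<tau>1_def indep_set_def by blast
    show "\<tau>1 \<subseteq> (\<Union>i<n. P i)" using sV part unfolding \<tau>1_def is_partition_def by blast
    fix i assume i: "i < n"
    show "card (\<tau>1 \<inter> P i) = 1"
    proof (cases "i = j")
      case True
      have "\<sigma> \<inter> P j = insert x (\<tau>0 \<inter> P j)" using x j by blast
      then have "\<tau>1 \<inter> P j = {x}" unfolding \<tau>1_def using y yx by blast
      then show ?thesis using True by simp
    next
      case False
      have "x \<notin> P i" using part_disj[OF part j(1) i] False j(2) by metis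
      moreover have "y \<notin> P i" using part_disj[OF part j(1) i] False ypj by metis
      ultimately have "\<tau>1 \<inter> P i = \<tau>0 \<inter> P i" unfolding \<tau>1_def x(2) by blast
      then show ?thesis using t0IT i unfolding indep_transversal_def by simp
    qed
  qed
  have un: "\<tau>0 \<union> \<tau>1 = \<sigma>" unfolding \<tau>1_def x(2) using yx by blast
  have adj: "RG_adj V E n P \<tau>0 \<tau>1" unfolding RG_adj_def un using t0IT t1IT s by simp
  have t1X: "\<tau>1 \<in> X" using X t1IT rtranclp.rtrancl_into_rtrancl[OF t0r adj] by simp
  have t1f: "\<tau>1 \<in> facets \<sigma>" unfolding \<tau>1_def facets_def using yx by blast
  have eq: "facets \<sigma> \<inter> X = {\<tau>0, \<tau>1}"
  proof
    show "{\<tau>0, \<tau>1} \<subseteq> facets \<sigma> \<inter> X" using t0 t1X t1f by blast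
    show "facets \<sigma> \<inter> X \<subseteq> {\<tau>0, \<tau>1}"
    proof
      fix \<tau> assume t: "\<tau> \<in> facets \<sigma> \<inter> X"
      then obtain w where w: "w \<in> \<sigma>" "\<tau> = \<sigma> - {w}" unfolding facets_def by blast
      have tIT: "indep_transversal V E n P \<tau>" using t X by blast
      obtain t where tt: "\<tau> \<inter> P j = {t}" using it_single[OF tIT j(1)] by blast
      show "\<tau> \<in> {\<tau>0, \<tau>1}"
      proof (rule ccontr)
        assume "\<tau> \<notin> {\<tau>0, \<tau>1}"
        then have "w \<noteq> x" "w \<noteq> y" using w x \<tau>1_def by auto
        then have "x \<in> \<tau> \<inter> P j" "y \<in> \<tau> \<inter> P j" using w x yx j ypj by auto
        then show False using tt yx by (metis IntD1 singletonD tt)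
      qed
    qed
  qed
  have "\<tau>0 \<noteq> \<tau>1" using x yx unfolding \<tau>1_def by blast
  then show ?thesis unfolding eq by simp
qed

lemma main_conn:
  assumes G: "fin_graph V E" and part: "is_partition V n P"
    and A: "\<And>I. I \<subseteq> {..<n} \<Longrightarrow> I \<noteq> {} \<Longrightarrow> acyc (parts_union P I) E (card I)"
  shows "RG_connected V E n P"
  unfolding RG_connected_def
proof (intro allI impI)
  fix T T' assume TT: "indep_transversal V E n P T \<and> indep_transversal V E n P T'"
  then have T: "indep_transversal V E n P T" and T': "indep_transversal V E n P T'" by auto
  show "(RG_adj V E n P)\<^sup>*\<^sup>* T T'"
  proof (rule ccontr)
    assume nc: "\<not> (RG_adj V E n P)\<^sup>*\<^sup>* T T'"
    have finV: "finite V" using G unfolding fin_graph_def by blast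
    define N where "N = {..<n::nat}"
    obtain d where d: "\<And>J. J \<subseteq> N \<and> card J \<le> n \<longrightarrow> dinv E P T T' d J"
      using build[OF part T T' A, of n] unfolding N_def by blast
    define D where "D = d N"
    have VN: "parts_union P N = V" unfolding N_def by (rule VI_all[OF part])
    have dN: "dinv E P T T' d N" using d[of N] unfolding N_def by simp
    have TV: "T \<inter> V = T" "T' \<inter> V = T'" using it_sub[OF T] it_sub[OF T'] by auto
    have fD: "finite D" and Df: "\<And>\<sigma>. \<sigma> \<in> D \<Longrightarrow> indep_set V E \<sigma> \<and> card \<sigma> = Suc n"
      and bdD: "bd D = sd (sds (\<lambda>i. d (N - {i})) N) (sd {T} {T'})"
      using dN unfolding dinv_def D_def VN TV by (auto simp: N_def)
    define X where "X = {\<tau>. indep_transversal V E n P \<tau> \<and> (RG_adj V E n P)\<^sup>*\<^sup>* T \<tau>}"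
    have fX: "finite X"
    proof (rule finite_subset[of _ "Pow V"])
      show "X \<subseteq> Pow V" unfolding X_def using it_sub by blast
      show "finite (Pow V)" using finV by simp
    qed
    have ev: "\<And>\<sigma>. \<sigma> \<in> D \<Longrightarrow> even (card (facets \<sigma> \<inter> X))"
      using facet_even[OF part _ _ X_def] Df by blast
    have "even (\<Sum>\<sigma>\<in>D. card (facets \<sigma> \<inter> X))"
    proof -
      have e: "{\<sigma>\<in>D. odd (card (facets \<sigma> \<inter> X))} = {}" using ev by blast
      show ?thesis using parity_sum[OF fD, of "\<lambda>\<sigma>. card (facets \<sigma> \<inter> X)"] unfolding e by simp
    qed
    moreover have "(\<Sum>\<sigma>\<in>D. card (facets \<sigma> \<inter> X)) = (\<Sum>\<tau>\<in>X. card {\<sigma>\<in>D. \<tau> \<in> facets \<sigma>})"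
    proof -
      have "\<And>\<sigma>. facets \<sigma> \<inter> X = {\<tau>\<in>X. \<tau> \<in> facets \<sigma>}" by blast
      then show ?thesis using double_count[OF fD fX, of "\<lambda>\<sigma> \<tau>. \<tau> \<in> facets \<sigma>"] by simp
    qed
    moreover have "{\<tau>\<in>X. odd (card {\<sigma>\<in>D. \<tau> \<in> facets \<sigma>})} = {T}"
    proof -
      have "{\<tau>\<in>X. odd (card {\<sigma>\<in>D. \<tau> \<in> facets \<sigma>})} = X \<inter> bd D"
        unfolding bd_def sds_def by blast
      also have "\<dots> = {T}"
      proof
        have TX: "T \<in> X" unfolding X_def using T by simp
        have T'X: "T' \<notin> X" unfolding X_def using nc by simp
        have nsds: "\<tau> \<notin> sds (\<lambda>i. d (N - {i})) N" if "\<tau> \<in> X" for \<tau>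
        proof
          assume "\<tau> \<in> sds (\<lambda>i. d (N - {i})) N"
          then obtain i where i: "i \<in> N" "\<tau> \<in> d (N - {i})" using sds_subset[of "\<lambda>i. d (N - {i})" N] by blast
          have "card (N - {i}) \<le> n" unfolding N_def by (metis card_Diff1_le card_lessThan finite_lessThan)
          then have "dinv E P T T' d (N - {i})" using d[of "N - {i}"] by blast
          then have "\<tau> \<subseteq> parts_union P (N - {i})" using i unfolding dinv_def indep_set_def by blast
          moreover have "parts_union P (N - {i}) \<inter> P i = {}"
            using part_disj[OF part] i unfolding parts_union_def N_def by blast
          ultimately have "\<tau> \<inter> P i = {}" by blast
          moreover have "card (\<tau> \<inter> P i) = 1" using that i unfolding X_def N_def indep_transversal_def by simp
          ultimately show False by simp
        qed
        show "X \<inter> bd D \<subseteq> {T}"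
        proof
          fix \<tau> assume t: "\<tau> \<in> X \<inter> bd D"
          then have "\<tau> \<in> sd {T} {T'}" using nsds bdD by auto
          then show "\<tau> \<in> {T}" using t T'X by auto
        qed
        show "{T} \<subseteq> X \<inter> bd D"
        proof -
          have "T \<noteq> T'" using nc by auto
          then have "T \<in> bd D" using nsds[OF TX] bdD by simp
          then show ?thesis using TX by blast
        qed
      qed
      finally show ?thesis .
    qed
    ultimately show False using parity_sum[OF fX, of "\<lambda>\<tau>. card {\<sigma>\<in>D. \<tau> \<in> facets \<sigma>}"] by simp
  qed
qed



theorem theorem6p2:
  fixes V :: "'a set" and E :: "'a \<Rightarrow> 'a \<Rightarrow> bool" and n :: nat and P :: "nat \<Rightarrow> 'a set"
  assumes "fin_graph V E"
    and "is_partition V n P"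
  shows "((\<forall>I. I \<subseteq> {..<n} \<and> I \<noteq> {} \<longrightarrow>
              tgamma (parts_union P I) E \<ge> enat (2 * card I + 1))
            \<longrightarrow> RG_connected V E n P)
       \<and> ((\<forall>I. I \<subseteq> {..<n} \<and> I \<noteq> {} \<longrightarrow>
              igamma (parts_union P I) E \<ge> enat (card I + 1))
            \<longrightarrow> RG_connected V E n P)"
proof -
  note G = assms(1) and part = assms(2)
  have finV: "finite V" and sym: "\<And>x y. E x y \<Longrightarrow> E y x" and irr: "\<And>x. \<not> E x x"
    using G unfolding fin_graph_def by auto
  have finW: "\<And>I. I \<subseteq> {..<n} \<Longrightarrow> finite (parts_union P I)"
    using VI_all[OF part] VI_mono finV by (metis finite_subset)
  show ?thesis
  proof (intro conjI impI)
    assume H: "\<forall>I. I \<subseteq> {..<n} \<and> I \<noteq> {} \<longrightarrow> tgamma (parts_union P I) E \<ge> enat (2 * card I + 1)"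
    show "RG_connected V E n P"
    proof (rule main_conn[OF G part])
      fix I assume I: "I \<subseteq> {..<n}" "I \<noteq> {}"
      define W where "W = parts_union P I"
      have tg: "tgamma W E \<ge> enat (2 * card I + 1)" using H I unfolding W_def by blast
      show "acyc (parts_union P I) E (card I)" unfolding W_def[symmetric]
      proof (rule acyc_tg[OF _ sym irr])
        show "finite W" unfolding W_def by (rule finW[OF I(1)])
        fix X assume X: "X \<subseteq> W" "card X \<le> 2 * card I"
        show "\<not> (\<forall>y\<in>W. \<exists>x\<in>X. E x y)"
        proof
          assume d: "\<forall>y\<in>W. \<exists>x\<in>X. E x y"
          have "X \<in> {X. X \<subseteq> W \<and> strongly_dominates (\<lambda>x y. x \<in> W \<and> y \<in> W \<and> E x y) X W}"
            using X d unfolding strongly_dominates_def by blast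
          then have "tgamma W E \<le> enat (card X)" unfolding tgamma_def by (rule INF_lower)
          then have "enat (2 * card I + 1) \<le> enat (card X)" using tg by (rule order_trans[rotated])
          then show False using X by simp
        qed
      qed
    qed
  next
    assume H: "\<forall>I. I \<subseteq> {..<n} \<and> I \<noteq> {} \<longrightarrow> igamma (parts_union P I) E \<ge> enat (card I + 1)"
    show "RG_connected V E n P"
    proof (rule main_conn[OF G part])
      fix I assume I: "I \<subseteq> {..<n}" "I \<noteq> {}"
      define W where "W = parts_union P I"
      define m where "m = card I"
      have ig: "igamma W E \<ge> enat (m + 1)" using H I unfolding W_def m_def by blast
      have "\<exists>S. indep_set W E S \<and> (\<forall>X. X \<subseteq> W \<longrightarrow> card X \<le> m \<longrightarrow> \<not> (\<forall>y\<in>S. \<exists>x\<in>X. E x y))"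
      proof (rule ccontr)
        assume "\<not> ?thesis"
        then have h: "\<And>S. indep_set W E S \<Longrightarrow> \<exists>X. X \<subseteq> W \<and> card X \<le> m \<and> (\<forall>y\<in>S. \<exists>x\<in>X. E x y)"
          by blast
        have "m \<in> {l::nat. \<forall>S. indep_set W E S \<longrightarrow>
              (\<exists>X. X \<subseteq> W \<and> card X \<le> l \<and> strongly_dominates (\<lambda>x y. x \<in> W \<and> y \<in> W \<and> E x y) X S)}"
        proof (intro CollectI allI impI)
          fix S assume S: "indep_set W E S"
          obtain X where X: "X \<subseteq> W" "card X \<le> m" "\<forall>y\<in>S. \<exists>x\<in>X. E x y" using h[OF S] by blast
          have "S \<subseteq> W" using S unfolding indep_set_def by blast
          then have "strongly_dominates (\<lambda>x y. x \<in> W \<and> y \<in> W \<and> E x y) X S"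
            unfolding strongly_dominates_def using X by blast
          then show "\<exists>X. X \<subseteq> W \<and> card X \<le> m \<and> strongly_dominates (\<lambda>x y. x \<in> W \<and> y \<in> W \<and> E x y) X S"
            using X by blast
        qed
        then have "igamma W E \<le> enat m" unfolding igamma_def by (rule INF_lower)
        then have "enat (m + 1) \<le> enat m" using ig by (rule order_trans[rotated])
        then show False by simp
      qed
      then obtain S where S: "indep_set W E S" "\<And>X. X \<subseteq> W \<Longrightarrow> card X \<le> m \<Longrightarrow> \<not> (\<forall>y\<in>S. \<exists>x\<in>X. E x y)"
        by blast
      show "acyc (parts_union P I) E (card I)" unfolding W_def[symmetric] m_def[symmetric]
        by (rule acyc_ig[OF _ sym irr S(1) S(2)]) (simp_all add: W_def finW[OF I(1)])
    qed
  qed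
qed


end
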